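(* Let $G=(V,E,w)$ be an undirected graph on $n$ nodes with positive edge weights, let $k$ be an integer with $1\le k\le n$, and let $\mathbf{A}\in\{\mathbf{A}_D,\mathbf{A}_P\}$. Let $c\in[0,1)$ and $\boldsymbol{\epsilon}\in[-c,1-c]^n$, and let the innate opinions be $\mathbf{s}_0=c\mathbf{1}+\boldsymbol{\epsilon}$. Let $\gamma_1,\gamma_2,\gamma_3\in(0,1)$ and assume that for all sets $X\subseteq V$ with $|X|=k$: (1) $(\mathbf{s}_X-\mathbf{s}_0)^{\intercal}\mathbf{A}\mathbf{s}_0\ge-\gamma_1\,\mathbf{s}_0^{\intercal}\mathbf{A}\mathbf{s}_0$; (2) $\boldsymbol{\epsilon}_{|X}^{\intercal}\mathbf{A}\boldsymbol{\epsilon}_{|X}\le\gamma_2\,\mathbf{s}_0^{\intercal}\mathbf{A}\mathbf{s}_0$; (3) $|\boldsymbol{\epsilon}_{|X}^{\intercal}\mathbf{A}\mathbf{1}_{|X}|\le\gamma_3\,\mathbf{s}_0^{\intercal}\mathbf{A}\mathbf{s}_0$. Suppose we have access to a $\beta$-approximation algorithm for the limited-information problem (L) below. Then one can compute a feasible solution for the full-information problem (F) below whose objective value is at least $\frac14\min\left\{\beta,\frac{1-2\gamma_1-2(1-c)\gamma_3}{1+2(1-c)\gamma_3+\gamma_2}\right\}$ times the optimal value of (F), using only the graph $G$ (and $k$) but not the opinions $\mathbf{s}_0$.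
   Context: $\mathbf{L}$ is the Laplacian of $G$ ($\mathbf{L}=\mathbf{D}-\mathbf{W}$ with $\mathbf{W}$ the weighted adjacency matrix and $\mathbf{D}$ the diagonal weighted degree matrix), $\mathbf{A}_D=(\mathbf{L}+\mathbf{I})^{-1}\mathbf{L}(\mathbf{L}+\mathbf{I})^{-1}$ (disagreement) and $\mathbf{A}_P=(\mathbf{I}+\mathbf{L})^{-1}(\mathbf{I}-\frac{\mathbf{1}\mathbf{1}^{\intercal}}{n})(\mathbf{I}+\mathbf{L})^{-1}$ (polarization); $\mathbf{1}$ is the all-ones vector. For $X\subseteq V$, $\mathbf{s}_X\in[0,1]^n$ is given by $\mathbf{s}_X(u)=1$ if $u\in X$ and $\mathbf{s}_X(u)=\mathbf{s}_0(u)$ otherwise; for a vector $\mathbf{v}$, $\mathbf{v}_{|X}(u)=\mathbf{v}(u)$ if $u\in X$ and $0$ otherwise. Problem (F) (full information; input $G$, $\mathbf{s}_0$, $k$): maximize $\mathbf{s}^{\intercal}\mathbf{A}\mathbf{s}$ subject to $\|\mathbf{s}-\mathbf{s}_0\|_0=k$ and $\mathbf{s}(u)\in\{\mathbf{s}_0(u),1\}$ for all $u\in V$. Problem (L) (limited information; input $G$, $k$): maximize $\mathbf{s}^{\intercal}\mathbf{A}\mathbf{s}$ subject to $\|\mathbf{s}\|_0=k$ and $\mathbf{s}\in[0,1]^n$. A $\beta$-approximation algorithm ($\beta\in(0,1]$) for (L) outputs a set $X\subseteq V$ with $|X|=k$ whose indicator vector $\mathbf{1}_{|X}$ attains value at least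 $\beta$ times the optimum of (L). *)

theory Defs
  imports "HOL-Analysis.Analysis"
begin

text \<open>Vertices are the elements of a finite type 'n (so n = CARD('n)); a weighted
undirected graph is given by its weighted adjacency matrix W.\<close>

definition weighted_graph :: "real^'n^'n \<Rightarrow> bool" where
  "weighted_graph W \<longleftrightarrow> (\<forall>i j. W $ i $ j = W $ j $ i \<and> W $ i $ j \<ge> 0) \<and> (\<forall>i. W $ i $ i = 0)"

definition degree_matrix :: "real^'n^'n \<Rightarrow> real^'n^'n" where
  "degree_matrix W = (\<chi> i j. if i = j then (\<Sum>l\<in>UNIV. W $ i $ l) else 0)"

definition laplacian :: "real^'n^'n \<Rightarrow> real^'n^'n" where
  "laplacian W = degree_matrix W - W"

definition A_D :: "real^'n^'n \<Rightarrow> real^'n^'n" where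
  "A_D W = matrix_inv (laplacian W + mat 1) ** laplacian W ** matrix_inv (laplacian W + mat 1)"

definition A_P :: "real^'n^'n \<Rightarrow> real^'n^'n" where
  "A_P W = matrix_inv (mat 1 + laplacian W)
           ** (mat 1 - (1 / real CARD('n)) *\<^sub>R (\<chi> i j. 1))
           ** matrix_inv (mat 1 + laplacian W)"

definition quad :: "real^'n^'n \<Rightarrow> real^'n \<Rightarrow> real" where
  "quad A s = s \<bullet> (A *v s)"

definition set_to_one :: "real^'n \<Rightarrow> 'n set \<Rightarrow> real^'n" where
  "set_to_one s0 X = (\<chi> u. if u \<in> X then 1 else s0 $ u)"

definition restr :: "real^'n \<Rightarrow> 'n set \<Rightarrow> real^'n" where
  "restr v X = (\<chi> u. if u \<in> X then v $ u else 0)"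

definition feasible_F :: "real^'n \<Rightarrow> nat \<Rightarrow> real^'n \<Rightarrow> bool" where
  "feasible_F s0 k s \<longleftrightarrow> card {u. s $ u \<noteq> s0 $ u} = k \<and> (\<forall>u. s $ u = s0 $ u \<or> s $ u = 1)"

definition feasible_L :: "nat \<Rightarrow> real^'n \<Rightarrow> bool" where
  "feasible_L k s \<longleftrightarrow> card {u. s $ u \<noteq> 0} = k \<and> (\<forall>u. 0 \<le> s $ u \<and> s $ u \<le> 1)"

text \<open>X is an admissible output of a beta-approximation algorithm for (L):
|X| = k and its indicator vector attains at least beta times the optimum (supremum) of (L).\<close>
definition beta_approx_L :: "real^'n^'n \<Rightarrow> nat \<Rightarrow> real \<Rightarrow> 'n set \<Rightarrow> bool" where
  "beta_approx_L A k \<beta> X \<longleftrightarrow> card X = k \<and>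
     (\<forall>s. feasible_L k s \<longrightarrow> quad A (restr (vec 1) X) \<ge> \<beta> * quad A s)"

end

theory Submission
  imports Defs
begin


lemma sym_bil:
  fixes A :: "real^'n^'n"
  assumes "transpose A = A"
  shows "x \<bullet> (A *v y) = y \<bullet> (A *v x)"
proof -
  have "x \<bullet> (A *v y) = (x v* A) \<bullet> y" by (simp add: dot_lmul_matrix)
  also have "x v* A = transpose A *v x" by simp
  finally show ?thesis using assms by (simp add: inner_commute)
qed

lemma inv_sym:
  fixes N :: "real^'n^'n"
  assumes sym: "transpose N = N" and ker: "\<forall>x. N *v x = 0 \<longrightarrow> x = 0"
  shows "N ** matrix_inv N = mat 1 \<and> matrix_inv N ** N = mat 1 \<and> transpose (matrix_inv N) = matrix_inv N"
proof -
  have "\<exists>B. B ** N = mat 1" using ker matrix_left_invertible_ker by blast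
  then have "invertible N" using invertible_left_inverse by blast
  then have "\<exists>A'. N ** A' = mat 1 \<and> A' ** N = mat 1" unfolding invertible_def .
  then have h: "N ** matrix_inv N = mat 1 \<and> matrix_inv N ** N = mat 1"
    unfolding matrix_inv_def by (rule someI_ex)
  let ?M = "matrix_inv N"
  have "transpose ?M ** N = mat 1"
    using h by (metis matrix_transpose_mul sym transpose_mat)
  then have "transpose ?M = transpose ?M ** (N ** ?M)" using h by (simp add: matrix_mul_rid)
  also have "\<dots> = ?M" using \<open>transpose ?M ** N = mat 1\<close>
    by (simp add: matrix_mul_assoc matrix_mul_lid)
  finally show ?thesis using h by simp
qed

lemma conj_psd:
  fixes M B :: "real^'n^'n"
  assumes "transpose M = M" "transpose B = B" "\<forall>x. 0 \<le> x \<bullet> (B *v x)"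
  shows "transpose (M ** B ** M) = M ** B ** M \<and> (\<forall>x. 0 \<le> x \<bullet> ((M ** B ** M) *v x))"
proof
  show "transpose (M ** B ** M) = M ** B ** M"
    using assms by (simp add: matrix_transpose_mul matrix_mul_assoc)
  show "\<forall>x. 0 \<le> x \<bullet> ((M ** B ** M) *v x)"
  proof
    fix x :: "real^'n"
    have "x \<bullet> ((M ** B ** M) *v x) = x \<bullet> (M *v (B *v (M *v x)))"
      by (simp add: matrix_vector_mul_assoc matrix_mul_assoc)
    also have "\<dots> = (x v* M) \<bullet> (B *v (M *v x))" by (simp add: dot_lmul_matrix)
    also have "x v* M = M *v x" by (metis assms(1) transpose_matrix_vector)
    finally show "0 \<le> x \<bullet> ((M ** B ** M) *v x)" using assms(3) by simp
  qed
qed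

lemma lap_sym:
  assumes "weighted_graph W"
  shows "transpose (laplacian W) = laplacian W"
  using assms unfolding weighted_graph_def laplacian_def degree_matrix_def transpose_def
  by (auto simp: vec_eq_iff)

lemma delta_sum: "(\<Sum>j\<in>UNIV. (if i = j then (d::real) else 0) * x $ j) = d * x $ i"
proof -
  have "(\<Sum>j\<in>UNIV. (if i = j then (d::real) else 0) * x $ j) = (\<Sum>j\<in>UNIV. if i = j then d * x $ j else 0)"
    by (rule sum.cong) auto
  also have "\<dots> = d * x $ i" by simp
  finally show ?thesis .
qed

lemma lap_psd:
  fixes W :: "real^'n^'n"
  assumes "weighted_graph W"
  shows "0 \<le> x \<bullet> (laplacian W *v x)"
proof -
  have s: "W $ i $ j = W $ j $ i" "W $ i $ j \<ge> 0" for i j using assms unfolding weighted_graph_def by auto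
  have comp: "(laplacian W *v x) $ i = (\<Sum>j\<in>UNIV. W $ i $ j * (x$i - x$j))" for i
  proof -
    have "(degree_matrix W *v x) $ i = (\<Sum>l\<in>UNIV. W $ i $ l) * x $ i"
      unfolding degree_matrix_def matrix_vector_mult_def
      by (simp add: delta_sum)
    moreover have "(W *v x) $ i = (\<Sum>j\<in>UNIV. W $ i $ j * x$j)"
      by (simp add: matrix_vector_mult_def)
    ultimately show ?thesis unfolding laplacian_def
      by (simp add: matrix_vector_mult_diff_rdistrib sum_distrib_left sum_subtractf right_diff_distrib mult.commute)
  qed
  have e: "x \<bullet> (laplacian W *v x) = (\<Sum>i\<in>UNIV. \<Sum>j\<in>UNIV. W $ i $ j * (x$i * x$i - x$i * x$j))"
    unfolding inner_vec_def comp
    by (simp add: sum_distrib_left algebra_simps)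
  have e2: "(\<Sum>i\<in>UNIV. \<Sum>j\<in>UNIV. W $ i $ j * (x$i * x$i - x$i * x$j)) =
      (\<Sum>i\<in>UNIV. \<Sum>j\<in>UNIV. W $ i $ j * (x$j * x$j - x$j * x$i))"
    by (subst sum.swap) (simp add: s(1))
  have "2 * (x \<bullet> (laplacian W *v x)) = (\<Sum>i\<in>UNIV. \<Sum>j\<in>UNIV. W $ i $ j * (x$i - x$j)^2)"
    unfolding e mult_2 apply (subst e2) apply (subst e2[symmetric])
    apply (subst (2) e2)
    by (simp add: sum.distrib[symmetric] algebra_simps power2_eq_square)
  moreover have "0 \<le> (\<Sum>i\<in>UNIV. \<Sum>j\<in>UNIV. W $ i $ j * (x$i - x$j)^2)"
    by (intro sum_nonneg mult_nonneg_nonneg s(2)) simp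
  ultimately show ?thesis by simp
qed

lemma LI_ker:
  fixes W :: "real^'n^'n"
  assumes "weighted_graph W"
  shows "\<forall>x. (laplacian W + mat 1) *v x = 0 \<longrightarrow> x = 0"
proof (intro allI impI)
  fix x :: "real^'n"
  assume "(laplacian W + mat 1) *v x = 0"
  then have "x \<bullet> ((laplacian W + mat 1) *v x) = 0" by simp
  then have "x \<bullet> (laplacian W *v x) + x \<bullet> x = 0"
    by (simp add: matrix_vector_mult_add_rdistrib inner_add_right)
  then have "x \<bullet> x \<le> 0" using lap_psd[OF assms, of x] by linarith
  then show "x = 0" by (metis inner_ge_zero inner_eq_zero_iff order_antisym)
qed

lemma proj_psd:
  fixes x :: "real^'n"
  shows "0 \<le> x \<bullet> ((mat 1 - (1 / real CARD('n)) *\<^sub>R (\<chi> i j. 1)) *v x)"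
proof -
  have "((\<chi> i j. 1) :: real^'n^'n) *v x = (\<Sum>i\<in>UNIV. x$i) *\<^sub>R vec 1"
    by (simp add: matrix_vector_mult_def vec_eq_iff)
  then have e: "x \<bullet> ((mat 1 - (1 / real CARD('n)) *\<^sub>R (\<chi> i j. 1)) *v x)
     = x \<bullet> x - (1 / real CARD('n)) * (x \<bullet> vec 1)^2"
    by (simp add: matrix_vector_mult_diff_rdistrib inner_diff_right scaleR_matrix_vector_assoc[symmetric]
        power2_eq_square inner_vec_def right_diff_distrib sum_subtractf sum_distrib_right[symmetric] sum_divide_distrib[symmetric])
  have cs: "(x \<bullet> vec 1)^2 \<le> (x \<bullet> x) * real CARD('n)"
    using Cauchy_Schwarz_ineq[of x "vec 1"] by (simp add: inner_vec_def)
  have "(1 / real CARD('n)) * (x \<bullet> vec 1)^2 \<le> x \<bullet> x"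
    using cs by (simp add: field_simps)
  then show ?thesis using e by simp
qed

lemma A_props:
  fixes W A :: "real^'n^'n"
  assumes "weighted_graph W" "A = A_D W \<or> A = A_P W"
  shows "transpose A = A \<and> (\<forall>x. 0 \<le> x \<bullet> (A *v x))"
proof -
  have sN: "transpose (laplacian W + mat 1) = laplacian W + mat 1"
    using lap_sym[OF assms(1)] by (simp add: transpose_def vec_eq_iff mat_def)
  note iv = inv_sym[OF sN LI_ker[OF assms(1)]]
  have eq: "mat 1 + laplacian W = laplacian W + mat 1" by (simp add: add.commute)
  have sP: "transpose (mat 1 - (1 / real CARD('n)) *\<^sub>R (\<chi> i j. 1) :: real^'n^'n) = mat 1 - (1 / real CARD('n)) *\<^sub>R (\<chi> i j. 1)"
    by (simp add: transpose_def vec_eq_iff mat_def)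
  show ?thesis using assms(2)
  proof
    assume "A = A_D W"
    then show ?thesis unfolding A_D_def
      using conj_psd[of "matrix_inv (laplacian W + mat 1)" "laplacian W"] iv lap_sym[OF assms(1)] lap_psd[OF assms(1)]
      by blast
  next
    assume "A = A_P W"
    then show ?thesis unfolding A_P_def eq
      using conj_psd[of "matrix_inv (laplacian W + mat 1)"] iv sP proj_psd
      by blast
  qed
qed



lemma quad_add:
  fixes A :: "real^'n^'n"
  assumes "transpose A = A"
  shows "quad A (a + b) = quad A a + 2 * (b \<bullet> (A *v a)) + quad A b"
  using sym_bil[OF assms, of a b]
  by (simp add: quad_def matrix_vector_right_distrib inner_add_left inner_add_right)

lemma quad_diff:
  fixes A :: "real^'n^'n"
  assumes "transpose A = A"
  shows "quad A (a - b) = quad A a - 2 * (b \<bullet> (A *v a)) + quad A b"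
  using sym_bil[OF assms, of a b]
  by (simp add: quad_def matrix_vector_mult_diff_distrib inner_diff_left inner_diff_right)

lemma quad_scale:
  fixes A :: "real^'n^'n"
  shows "quad A (r *\<^sub>R a) = r^2 * quad A a"
  by (simp add: quad_def matrix_vector_mult_scaleR power2_eq_square)

lemma core:
  fixes A :: "real^'n^'n" and k :: nat and c \<beta> \<gamma>1 \<gamma>2 \<gamma>3 :: real
    and eps :: "real^'n" and X :: "'n set"
  assumes sym: "transpose A = A" and psd: "\<forall>x. 0 \<le> x \<bullet> (A *v x)"
    and c: "0 \<le> c" "c < 1"
    and \<gamma>: "0 < \<gamma>1" "\<gamma>1 < 1" "0 < \<gamma>2" "\<gamma>2 < 1" "0 < \<gamma>3" "\<gamma>3 < 1"
    and h1: "\<forall>Y. card Y = k \<longrightarrow>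
       (set_to_one (c *\<^sub>R vec 1 + eps) Y - (c *\<^sub>R vec 1 + eps)) \<bullet> (A *v (c *\<^sub>R vec 1 + eps))
         \<ge> - \<gamma>1 * quad A (c *\<^sub>R vec 1 + eps)"
    and h2: "\<forall>Y. card Y = k \<longrightarrow> quad A (restr eps Y) \<le> \<gamma>2 * quad A (c *\<^sub>R vec 1 + eps)"
    and h3: "\<forall>Y. card Y = k \<longrightarrow>
       \<bar>restr eps Y \<bullet> (A *v restr (vec 1) Y)\<bar> \<le> \<gamma>3 * quad A (c *\<^sub>R vec 1 + eps)"
    and \<beta>: "0 < \<beta>" "\<beta> \<le> 1"
    and X: "beta_approx_L A k \<beta> X"
  shows "(\<forall>u. set_to_one (c *\<^sub>R vec 1 + eps) X $ u = (c *\<^sub>R vec 1 + eps) $ u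
                \<or> set_to_one (c *\<^sub>R vec 1 + eps) X $ u = 1)
         \<and> card {u. set_to_one (c *\<^sub>R vec 1 + eps) X $ u \<noteq> (c *\<^sub>R vec 1 + eps) $ u} \<le> k
         \<and> (\<forall>s. feasible_F (c *\<^sub>R vec 1 + eps) k s \<longrightarrow>
              quad A (set_to_one (c *\<^sub>R vec 1 + eps) X)
                \<ge> (1/4) * min \<beta> ((1 - 2*\<gamma>1 - 2*(1-c)*\<gamma>3) / (1 + 2*(1-c)*\<gamma>3 + \<gamma>2)) * quad A s)"
proof -
  define s0 where "s0 = c *\<^sub>R vec 1 + eps"
  define q0 where "q0 = quad A s0"
  have qpos: "0 \<le> quad A x" for x using psd by (simp add: quad_def)
  have q0: "0 \<le> q0" unfolding q0_def by (rule qpos)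
  have cardX: "card X = k" using X unfolding beta_approx_L_def by simp
  have part1: "\<forall>u. set_to_one s0 X $ u = s0 $ u \<or> set_to_one s0 X $ u = 1"
    by (simp add: set_to_one_def)
  have "{u. set_to_one s0 X $ u \<noteq> s0 $ u} \<subseteq> X" by (auto simp: set_to_one_def)
  then have part2: "card {u. set_to_one s0 X $ u \<noteq> s0 $ u} \<le> k"
    using cardX by (metis card_mono finite)
  have dec: "set_to_one s0 Y - s0 = (1 - c) *\<^sub>R restr (vec 1) Y - restr eps Y" for Y
    by (simp add: s0_def set_to_one_def restr_def vec_eq_iff)
  have qd: "quad A (set_to_one s0 Y - s0) = (1-c)^2 * quad A (restr (vec 1) Y)
      - 2 * (1-c) * (restr eps Y \<bullet> (A *v restr (vec 1) Y)) + quad A (restr eps Y)" for Y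
    unfolding dec quad_diff[OF sym] quad_scale
    by (simp add: matrix_vector_mult_scaleR)
  define N where "N = 1 - 2*\<gamma>1 - 2*(1-c)*\<gamma>3"
  define D where "D = 1 + 2*(1-c)*\<gamma>3 + \<gamma>2"
  have Dpos: "0 < D" unfolding D_def using c \<gamma> by (simp add: add_pos_nonneg)
  have lowX: "quad A (set_to_one s0 X) \<ge> N * q0 + (1-c)^2 * quad A (restr (vec 1) X)"
  proof -
    have e: "set_to_one s0 X = s0 + (set_to_one s0 X - s0)" by simp
    have "quad A (set_to_one s0 X) = q0 + 2 * ((set_to_one s0 X - s0) \<bullet> (A *v s0)) + quad A (set_to_one s0 X - s0)"
      unfolding q0_def by (subst e, subst quad_add[OF sym]) simp
    moreover have "(set_to_one s0 X - s0) \<bullet> (A *v s0) \<ge> - \<gamma>1 * q0"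
      using h1 cardX unfolding s0_def q0_def by blast
    moreover have "restr eps X \<bullet> (A *v restr (vec 1) X) \<le> \<gamma>3 * q0"
      using h3 cardX unfolding s0_def q0_def by fastforce
    moreover have "0 \<le> quad A (restr eps X)" by (rule qpos)
    moreover have "(1-c) * (restr eps X \<bullet> (A *v restr (vec 1) X)) \<le> (1-c) * (\<gamma>3 * q0)"
      using c calculation(3) by (intro mult_left_mono) auto
    ultimately have "quad A (set_to_one s0 X) \<ge> q0 - 2 * \<gamma>1 * q0 + (1-c)^2 * quad A (restr (vec 1) X)
      - 2 * (1-c) * (\<gamma>3 * q0)"
      unfolding qd by linarith
    then show ?thesis unfolding N_def by (simp add: algebra_simps)
  qed
  have part3: "quad A (set_to_one s0 X) \<ge> (1/4) * min \<beta> (N / D) * quad A s"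
    if fs: "feasible_F s0 k s" for s
  proof -
    define Y where "Y = {u. s $ u \<noteq> s0 $ u}"
    have cardY: "card Y = k" using fs unfolding feasible_F_def Y_def by simp
    have sY: "s = set_to_one s0 Y"
      using fs unfolding feasible_F_def Y_def set_to_one_def vec_eq_iff by auto
    have "feasible_L k (restr (vec 1) Y)"
      unfolding feasible_L_def restr_def using cardY by simp
    then have bet: "quad A (restr (vec 1) X) \<ge> \<beta> * quad A (restr (vec 1) Y)"
      using X unfolding beta_approx_L_def by blast
    define d where "d = set_to_one s0 Y - s0"
    have "0 \<le> quad A (s0 - d)" by (rule qpos)
    then have "2 * (d \<bullet> (A *v s0)) \<le> q0 + quad A d"
      unfolding quad_diff[OF sym] q0_def by simp
    moreover have "quad A s = q0 + 2 * (d \<bullet> (A *v s0)) + quad A d"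
    proof -
      have e: "set_to_one s0 Y = s0 + (set_to_one s0 Y - s0)" by simp
      show ?thesis unfolding q0_def sY d_def by (subst e, subst quad_add[OF sym]) simp
    qed
    ultimately have u1: "quad A s \<le> 2 * q0 + 2 * quad A d" by linarith
    have "- \<gamma>3 * q0 \<le> restr eps Y \<bullet> (A *v restr (vec 1) Y)"
      using h3 cardY unfolding s0_def q0_def by fastforce
    moreover have "quad A (restr eps Y) \<le> \<gamma>2 * q0"
      using h2 cardY unfolding s0_def q0_def by blast
    moreover have "(1-c) * (- \<gamma>3 * q0) \<le> (1-c) * (restr eps Y \<bullet> (A *v restr (vec 1) Y))"
      using c calculation(1) by (intro mult_left_mono) auto
    ultimately have "quad A d \<le> (1-c)^2 * quad A (restr (vec 1) Y) + 2 * (1-c) * (\<gamma>3 * q0) + \<gamma>2 * q0"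
      unfolding d_def qd by linarith
    then have upper: "quad A s \<le> 2 * (D * q0 + (1-c)^2 * quad A (restr (vec 1) Y))"
      using u1 unfolding D_def by (simp add: algebra_simps)
    have qs: "0 \<le> quad A s" by (rule qpos)
    have qY: "0 \<le> quad A (restr (vec 1) Y)" by (rule qpos)
    have qX: "0 \<le> quad A (set_to_one s0 X)" by (rule qpos)
    define m where "m = min \<beta> (N / D)"
    show ?thesis
    proof (cases "m < 0")
      case True
      then have "m * quad A s \<le> 0" using qs by (simp add: mult_nonpos_nonneg)
      then show ?thesis using qX unfolding m_def by simp
    next
      case False
      then have m0: "0 \<le> m" by simp
      have "m * D \<le> N" unfolding m_def using Dpos
        by (metis min.cobounded2 nonzero_mult_div_cancel_right order_less_irrefl pos_le_divide_eq)
      then have a1: "m * D * q0 \<le> N * q0" using q0 by (rule mult_right_mono)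
      have "m \<le> \<beta>" unfolding m_def by simp
      then have "m * quad A (restr (vec 1) Y) \<le> \<beta> * quad A (restr (vec 1) Y)" using qY by (rule mult_right_mono)
      then have "m * quad A (restr (vec 1) Y) \<le> quad A (restr (vec 1) X)" using bet by linarith
      then have a2: "(1-c)^2 * (m * quad A (restr (vec 1) Y)) \<le> (1-c)^2 * quad A (restr (vec 1) X)"
        by (rule mult_left_mono) simp
      have "m * (D * q0 + (1-c)^2 * quad A (restr (vec 1) Y)) \<le> quad A (set_to_one s0 X)"
        using a1 a2 lowX by (simp add: algebra_simps)
      moreover have "m * quad A s \<le> m * (2 * (D * q0 + (1-c)^2 * quad A (restr (vec 1) Y)))"
        using upper m0 by (rule mult_left_mono)
      ultimately have "m * quad A s \<le> 2 * quad A (set_to_one s0 X)" by (simp add: algebra_simps)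
      then show ?thesis using qX unfolding m_def by simp
    qed
  qed
  show ?thesis using part1 part2 part3 unfolding s0_def N_def D_def by blast
qed


theorem theorem3p1:
  fixes W A :: "real^'n^'n" and k :: nat and c \<beta> \<gamma>1 \<gamma>2 \<gamma>3 :: real
    and eps :: "real^'n" and X :: "'n set"
  assumes graph: "weighted_graph W"
    and k: "1 \<le> k" "k \<le> CARD('n)"
    and A: "A = A_D W \<or> A = A_P W"
    and c: "0 \<le> c" "c < 1"
    and eps: "\<forall>u. - c \<le> eps $ u \<and> eps $ u \<le> 1 - c"
    and \<gamma>: "0 < \<gamma>1" "\<gamma>1 < 1" "0 < \<gamma>2" "\<gamma>2 < 1" "0 < \<gamma>3" "\<gamma>3 < 1"
    and h1: "\<forall>Y. card Y = k \<longrightarrow>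
       (set_to_one (c *\<^sub>R vec 1 + eps) Y - (c *\<^sub>R vec 1 + eps)) \<bullet> (A *v (c *\<^sub>R vec 1 + eps))
         \<ge> - \<gamma>1 * quad A (c *\<^sub>R vec 1 + eps)"
    and h2: "\<forall>Y. card Y = k \<longrightarrow> quad A (restr eps Y) \<le> \<gamma>2 * quad A (c *\<^sub>R vec 1 + eps)"
    and h3: "\<forall>Y. card Y = k \<longrightarrow>
       \<bar>restr eps Y \<bullet> (A *v restr (vec 1) Y)\<bar> \<le> \<gamma>3 * quad A (c *\<^sub>R vec 1 + eps)"
    and \<beta>: "0 < \<beta>" "\<beta> \<le> 1"
    and X: "beta_approx_L A k \<beta> X"
  shows "(\<forall>u. set_to_one (c *\<^sub>R vec 1 + eps) X $ u = (c *\<^sub>R vec 1 + eps) $ u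
                \<or> set_to_one (c *\<^sub>R vec 1 + eps) X $ u = 1)
         \<and> card {u. set_to_one (c *\<^sub>R vec 1 + eps) X $ u \<noteq> (c *\<^sub>R vec 1 + eps) $ u} \<le> k
         \<and> (\<forall>s. feasible_F (c *\<^sub>R vec 1 + eps) k s \<longrightarrow>
              quad A (set_to_one (c *\<^sub>R vec 1 + eps) X)
                \<ge> (1/4) * min \<beta> ((1 - 2*\<gamma>1 - 2*(1-c)*\<gamma>3) / (1 + 2*(1-c)*\<gamma>3 + \<gamma>2)) * quad A s)"
  proof -
  have P: "transpose A = A \<and> (\<forall>x. 0 \<le> x \<bullet> (A *v x))" by (rule A_props[OF graph A])
  show ?thesis
    by (rule core[OF conjunct1[OF P] conjunct2[OF P] c \<gamma> h1 h2 h3 \<beta> X])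
qed

end
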